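(* Consider contextual bilateral trade: the seller has an unknown vector $\theta^s\in\mathbb B_d$, the buyer an unknown vector $\theta^b\in\mathbb B_d$, and in round $t$ a context $x_t\in\mathbb B_d$ (chosen adversarially, revealed before pricing) determines cost $c_t=\langle\theta^s,x_t\rangle$ and value $v_t=\langle\theta^b,x_t\rangle$. Run the following algorithm (Multi-Scale Steiner GFT Maximization). Let $\Phi_1=\mathbb B_d$ and $\delta_\ell=2^{-\ell}/(8d)$. In round $t$, let $\ell_t$ be the largest integer with $w_{\Phi_t}(x_t)\le 2^{-\ell_t}$ (if the width is $0$, post an arbitrary price), and post the single price $y_t$ defined by $\mathrm{vol}(\{\theta\in\Phi_t+\delta_{\ell_t}\mathbb B_d:\langle\theta,x_t\rangle\ge y_t\})=\frac12\mathrm{vol}(\Phi_t+\delta_{\ell_t}\mathbb B_d)$. If the seller accepts and the buyer rejects, set $\Phi_{t+1}=\{\theta\in\Phi_t:\langle\theta,x_t\rangle\le y_t\}$; if the seller rejects and the buyer accepts, set $\Phi_{t+1}=\{\theta\in\Phi_t:\langle\theta,x_t\rangle\ge y_t\}$; otherwise $\Phi_{t+1}=\Phi_t$. Then the cumulative gains-from-trade regret is $O(d\log d)$, independent of $T$ and of the context sequence.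
   Context: $\mathbb B_d$ is the closed unit Euclidean ball in $\mathbb R^d$; $A+rB_d$ denotes Minkowski sum; $\mathrm{vol}$ is $d$-dimensional volume. The width of a convex set $K$ in direction $x$ is $w_K(x)=\max_{\theta_1,\theta_2\in K}\langle\theta_1-\theta_2,x\rangle$. The seller accepts price $y$ iff $y\ge c_t$, the buyer iff $y\le v_t$; a trade in round $t$ yields GFT $v_t-c_t$, else $0$. Round-$t$ regret is $\max\{v_t-c_t,0\}$ minus the realized GFT; cumulative regret is the sum over rounds. *)

theory Defs
  imports "HOL-Analysis.Analysis" "HOL-Probability.Probability"
begin

text \<open>Vectors of R^d are represented as functions nat => real vanishing outside {..<d},
  so that the dimension d is an ordinary natural number (needed because the regret
  bound O(d log d) has a constant uniform in d).\<close>

definition rvec :: "nat \<Rightarrow> (nat \<Rightarrow> real) set" where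
  "rvec d = {\<theta>. \<forall>i\<ge>d. \<theta> i = 0}"

definition ip :: "nat \<Rightarrow> (nat \<Rightarrow> real) \<Rightarrow> (nat \<Rightarrow> real) \<Rightarrow> real" where
  "ip d a b = (\<Sum>i<d. a i * b i)"

definition rball :: "nat \<Rightarrow> real \<Rightarrow> (nat \<Rightarrow> real) set" where
  "rball d r = {\<theta>\<in>rvec d. sqrt (\<Sum>i<d. (\<theta> i)\<^sup>2) \<le> r}"

definition mink :: "nat \<Rightarrow> (nat \<Rightarrow> real) set \<Rightarrow> real \<Rightarrow> (nat \<Rightarrow> real) set" where
  "mink d A r = {(\<lambda>i. a i + b i) | a b. a \<in> A \<and> b \<in> rball d r}"

definition vol :: "nat \<Rightarrow> (nat \<Rightarrow> real) set \<Rightarrow> real" where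
  "vol d S = measure (Pi\<^sub>M {..<d} (\<lambda>_. lborel))
      {f \<in> space (Pi\<^sub>M {..<d} (\<lambda>_. lborel)). (\<lambda>i. if i < d then f i else 0) \<in> S}"

definition width :: "nat \<Rightarrow> (nat \<Rightarrow> real) set \<Rightarrow> (nat \<Rightarrow> real) \<Rightarrow> real" where
  "width d K x = Sup {ip d (\<lambda>i. a i - b i) x | a b. a \<in> K \<and> b \<in> K}"

definition scale :: "real \<Rightarrow> int" where
  "scale w = (GREATEST l::int. w \<le> 2 powr (- real_of_int l))"

definition delta :: "nat \<Rightarrow> int \<Rightarrow> real" where
  "delta d l = 2 powr (- real_of_int l) / (8 * real d)"

text \<open>Knowledge sets Phi_t (rounds indexed from 0), driven by contexts x, posted prices y,
  and the hidden seller/buyer vectors.\<close>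
primrec knowledge :: "nat \<Rightarrow> (nat \<Rightarrow> real) \<Rightarrow> (nat \<Rightarrow> real) \<Rightarrow> (nat \<Rightarrow> nat \<Rightarrow> real)
    \<Rightarrow> (nat \<Rightarrow> real) \<Rightarrow> nat \<Rightarrow> (nat \<Rightarrow> real) set" where
  "knowledge d ths thb x y 0 = rball d 1"
| "knowledge d ths thb x y (Suc t) =
     (let P = knowledge d ths thb x y t; c = ip d ths (x t); v = ip d thb (x t) in
      if c \<le> y t \<and> \<not> (y t \<le> v) then {\<theta>\<in>P. ip d \<theta> (x t) \<le> y t}
      else if \<not> (c \<le> y t) \<and> y t \<le> v then {\<theta>\<in>P. ip d \<theta> (x t) \<ge> y t}
      else P)"

definition steiner_prices :: "nat \<Rightarrow> (nat \<Rightarrow> real) \<Rightarrow> (nat \<Rightarrow> real) \<Rightarrow> (nat \<Rightarrow> nat \<Rightarrow> real)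
    \<Rightarrow> (nat \<Rightarrow> real) \<Rightarrow> bool" where
  "steiner_prices d ths thb x y \<longleftrightarrow>
     (\<forall>t. let P = knowledge d ths thb x y t; w = width d P (x t);
             E = mink d P (delta d (scale w)) in
          w \<noteq> 0 \<longrightarrow> vol d {\<theta>\<in>E. ip d \<theta> (x t) \<ge> y t} = vol d E / 2)"

definition round_regret :: "real \<Rightarrow> real \<Rightarrow> real \<Rightarrow> real" where
  "round_regret c v y = max (v - c) 0 - (if c \<le> y \<and> y \<le> v then v - c else 0)"

definition cum_regret :: "nat \<Rightarrow> (nat \<Rightarrow> real) \<Rightarrow> (nat \<Rightarrow> real) \<Rightarrow> (nat \<Rightarrow> nat \<Rightarrow> real)
    \<Rightarrow> (nat \<Rightarrow> real) \<Rightarrow> nat \<Rightarrow> real" where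
  "cum_regret d ths thb x y T = (\<Sum>t<T. round_regret (ip d ths (x t)) (ip d thb (x t)) (y t))"

end

theory Submission imports Defs begin

abbreviation MM :: "nat \<Rightarrow> (nat \<Rightarrow> real) measure" where
  "MM d \<equiv> Pi\<^sub>M {..<d} (\<lambda>_. lborel)"

definition ext :: "nat \<Rightarrow> (nat \<Rightarrow> real) \<Rightarrow> (nat \<Rightarrow> real)" where
  "ext d f = (\<lambda>i. if i < d then f i else 0)"

definition pre :: "nat \<Rightarrow> (nat \<Rightarrow> real) set \<Rightarrow> (nat \<Rightarrow> real) set" where
  "pre d S = {f \<in> space (MM d). ext d f \<in> S}"

lemma vol_pre: "vol d S = measure (MM d) (pre d S)"
  by (simp add: vol_def pre_def ext_def)

lemma ext_measurable: "ext d \<in> borel_measurable (MM d)"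
proof (rule measurable_coordinatewise_then_product)
  fix i
  show "(\<lambda>f. ext d f i) \<in> borel_measurable (MM d)"
  proof (cases "i < d")
    case True
    then have "(\<lambda>f. ext d f i) = (\<lambda>f. f i)" unfolding ext_def by simp
    then show ?thesis using True by (simp add: measurable_component_singleton)
  next
    case False
    then have "(\<lambda>f. ext d f i) = (\<lambda>f. 0)" unfolding ext_def by simp
    then show ?thesis by simp
  qed
qed

lemma pre_sets: "S \<in> sets borel \<Longrightarrow> pre d S \<in> sets (MM d)"
proof -
  assume "S \<in> sets borel"
  then have "ext d -` S \<inter> space (MM d) \<in> sets (MM d)"
    using ext_measurable measurable_sets by blast
  moreover have "pre d S = ext d -` S \<inter> space (MM d)" unfolding pre_def by auto
  ultimately show ?thesis by simp
qed

definition cube :: "nat \<Rightarrow> (nat \<Rightarrow> real) \<Rightarrow> real \<Rightarrow> (nat \<Rightarrow> real) set" where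
  "cube d c r = {\<theta>\<in>rvec d. \<forall>i<d. \<bar>\<theta> i - c i\<bar> \<le> r}"

interpretation ps: product_sigma_finite "\<lambda>_::nat. lborel::real measure"
  by standard

lemma pre_cube: "pre d (cube d c r) = Pi\<^sub>E {..<d} (\<lambda>i. {c i - r .. c i + r})"
proof (intro set_eqI iffI)
  fix f assume "f \<in> pre d (cube d c r)"
  then have f: "f \<in> Pi\<^sub>E {..<d} (\<lambda>_. UNIV)" "\<forall>i<d. \<bar>f i - c i\<bar> \<le> r"
    unfolding pre_def cube_def ext_def by (auto simp: space_PiM)
  then show "f \<in> Pi\<^sub>E {..<d} (\<lambda>i. {c i - r .. c i + r})"
    unfolding PiE_iff by (auto simp: abs_le_iff)
next
  fix f assume f: "f \<in> Pi\<^sub>E {..<d} (\<lambda>i. {c i - r .. c i + r})"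
  then have "f \<in> space (MM d)" by (auto simp: space_PiM PiE_iff)
  have "\<forall>i<d. \<bar>ext d f i - c i\<bar> \<le> r"
  proof (intro allI impI)
    fix i assume "i < d"
    then have "f i \<in> {c i - r .. c i + r}" using f by (auto simp: PiE_def Pi_def)
    then show "\<bar>ext d f i - c i\<bar> \<le> r" using \<open>i < d\<close> unfolding ext_def by (simp add: abs_diff_le_iff)
  qed
  moreover have "ext d f \<in> rvec d" unfolding rvec_def ext_def by simp
  ultimately have "ext d f \<in> cube d c r" unfolding cube_def by simp
  with \<open>f \<in> space (MM d)\<close> show "f \<in> pre d (cube d c r)" unfolding pre_def by simp
qed

lemma emeasure_cube: "r \<ge> 0 \<Longrightarrow> emeasure (MM d) (pre d (cube d c r)) = ennreal ((2*r)^d)"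
proof -
  assume r: "r \<ge> 0"
  have "emeasure (MM d) (Pi\<^sub>E {..<d} (\<lambda>i. {c i - r .. c i + r})) =
     (\<Prod>i<d. emeasure lborel {c i - r .. c i + r})"
    by (rule ps.emeasure_PiM) auto
  also have "\<dots> = (\<Prod>i<d. ennreal (2*r))" using r by (intro prod.cong) auto
  also have "\<dots> = ennreal ((2*r)^d)" using r by (simp add: ennreal_power)
  finally show ?thesis unfolding pre_cube .
qed

lemma measure_cube: "r \<ge> 0 \<Longrightarrow> vol d (cube d c r) = (2*r)^d"
proof -
  assume r: "r \<ge> 0"
  have "vol d (cube d c r) = enn2real (ennreal ((2*r)^d))"
    unfolding vol_pre measure_def emeasure_cube[OF r] ..
  also have "\<dots> = (2*r)^d" using r by simp
  finally show ?thesis .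
qed

lemma pre_mono: "S \<subseteq> T \<Longrightarrow> pre d S \<subseteq> pre d T"
  unfolding pre_def by auto

lemma cube_fmeasurable: "r \<ge> 0 \<Longrightarrow> pre d (cube d c r) \<in> fmeasurable (MM d)"
proof (rule fmeasurableI)
  show "pre d (cube d c r) \<in> sets (MM d)" unfolding pre_cube by (rule sets_PiM_I_finite) auto
  assume "r \<ge> 0"
  then show "emeasure (MM d) (pre d (cube d c r)) < \<infinity>"
    unfolding emeasure_cube[OF \<open>r \<ge> 0\<close>] by simp
qed

lemma pre_fmeasurable:
  assumes "S \<in> sets borel" "S \<subseteq> cube d c r" "r \<ge> 0"
  shows "pre d S \<in> fmeasurable (MM d)"
  by (rule fmeasurableI2[OF cube_fmeasurable[OF assms(3)] pre_mono[OF assms(2)] pre_sets[OF assms(1)]])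

lemma lborel_affine_emeasure:
  fixes c t :: real
  assumes "c \<noteq> 0" "A \<in> sets lborel"
  shows "emeasure lborel A = ennreal \<bar>c\<bar> * emeasure lborel {x. t + c * x \<in> A}"
proof -
  have m: "(\<lambda>x. t + c * x) \<in> measurable borel borel" by simp
  have "emeasure lborel A = emeasure (density (distr lborel borel (\<lambda>x. t + c * x)) (\<lambda>_. ennreal \<bar>c\<bar>)) A"
    using lborel_real_affine[OF assms(1), of t] by simp
  also have "\<dots> = ennreal \<bar>c\<bar> * emeasure (distr lborel borel (\<lambda>x. t + c * x)) A"
    using assms(2) by (simp add: emeasure_density_const)
  also have "\<dots> = ennreal \<bar>c\<bar> * emeasure lborel ((\<lambda>x. t + c * x) -` A \<inter> space lborel)"
    using assms(2) m by (simp add: emeasure_distr)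
  also have "(\<lambda>x. t + c * x) -` A \<inter> space lborel = {x. t + c * x \<in> A}" by auto
  finally show ?thesis .
qed

definition aff :: "nat \<Rightarrow> real \<Rightarrow> (nat \<Rightarrow> real) \<Rightarrow> (nat \<Rightarrow> real) \<Rightarrow> (nat \<Rightarrow> real)" where
  "aff d c q f = (\<lambda>i\<in>{..<d}. c * f i + q i)"

lemma aff_measurable: "aff d c q \<in> measurable (MM d) (MM d)"
  unfolding aff_def
proof (rule measurable_restrict)
  fix i assume "i \<in> {..<d}"
  then show "(\<lambda>f. c * f i + q i) \<in> measurable (MM d) lborel"
    by measurable
qed

lemma affine_scaling:
  fixes c :: real
  assumes c: "c \<noteq> 0" and E: "E \<in> sets (MM d)"
  shows "emeasure (MM d) E = ennreal (\<bar>c\<bar>^d) * emeasure (MM d) {f \<in> space (MM d). aff d c q f \<in> E}"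
proof -
  define g where "g = aff d c q"
  have gm: "g \<in> measurable (MM d) (MM d)" unfolding g_def by (rule aff_measurable)
  define P where "P = density (distr (MM d) (MM d) g) (\<lambda>_. ennreal (\<bar>c\<bar>^d))"
  have "P = MM d"
  proof (rule ps.PiM_eqI)
    show "finite {..<d}" by simp
    show "sets P = sets (MM d)" unfolding P_def by simp
    fix A :: "nat \<Rightarrow> real set" assume A: "\<And>i. i \<in> {..<d} \<Longrightarrow> A i \<in> sets lborel"
    have PA: "Pi\<^sub>E {..<d} A \<in> sets (MM d)" by (rule sets_PiM_I_finite) (use A in auto)
    have pre: "g -` Pi\<^sub>E {..<d} A \<inter> space (MM d) = Pi\<^sub>E {..<d} (\<lambda>i. {x. q i + c * x \<in> A i})"
      unfolding g_def aff_def
    proof (intro set_eqI iffI)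
      fix f assume "f \<in> (\<lambda>f. \<lambda>i\<in>{..<d}. c * f i + q i) -` Pi\<^sub>E {..<d} A \<inter> space (MM d)"
      then have "\<forall>i\<in>{..<d}. c * f i + q i \<in> A i" "f \<in> extensional {..<d}"
        by (simp_all only: vimage_eq Int_iff restrict_PiE_iff space_PiM PiE_iff) (simp_all add: restrict_def)
      then show "f \<in> Pi\<^sub>E {..<d} (\<lambda>i. {x. q i + c * x \<in> A i})"
        by (simp add: PiE_iff add.commute)
    next
      fix f assume "f \<in> Pi\<^sub>E {..<d} (\<lambda>i. {x. q i + c * x \<in> A i})"
      then have "\<forall>i\<in>{..<d}. c * f i + q i \<in> A i" "f \<in> extensional {..<d}"
        by (simp_all add: PiE_iff add.commute)
      then show "f \<in> (\<lambda>f. \<lambda>i\<in>{..<d}. c * f i + q i) -` Pi\<^sub>E {..<d} A \<inter> space (MM d)"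
        by (simp add: restrict_PiE_iff space_PiM PiE_iff)
    qed
    have Ai: "\<And>i. i \<in> {..<d} \<Longrightarrow> {x. q i + c * x \<in> A i} \<in> sets lborel"
    proof -
      fix i assume "i \<in> {..<d}"
      have "(\<lambda>x. q i + c * x) -` A i \<inter> space lborel \<in> sets lborel"
        using A[OF \<open>i \<in> {..<d}\<close>] by (intro measurable_sets[of _ lborel lborel]) auto
      then show "{x. q i + c * x \<in> A i} \<in> sets lborel" by (simp add: vimage_def)
    qed
    have "emeasure P (Pi\<^sub>E {..<d} A) = ennreal (\<bar>c\<bar>^d) * emeasure (distr (MM d) (MM d) g) (Pi\<^sub>E {..<d} A)"
      unfolding P_def using PA by (simp add: emeasure_density_const)
    also have "\<dots> = ennreal (\<bar>c\<bar>^d) * emeasure (MM d) (Pi\<^sub>E {..<d} (\<lambda>i. {x. q i + c * x \<in> A i}))"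
      using PA gm by (simp add: emeasure_distr pre)
    also have "\<dots> = ennreal (\<bar>c\<bar>^d) * (\<Prod>i<d. emeasure lborel {x. q i + c * x \<in> A i})"
      using Ai by (subst ps.emeasure_PiM) auto
    also have "\<dots> = (\<Prod>i<d. ennreal \<bar>c\<bar> * emeasure lborel {x. q i + c * x \<in> A i})"
      by (simp add: prod.distrib ennreal_power)
    also have "\<dots> = (\<Prod>i<d. emeasure lborel (A i))"
      using lborel_affine_emeasure[OF c] A by (intro prod.cong) auto
    finally show "emeasure P (Pi\<^sub>E {..<d} A) = (\<Prod>i<d. emeasure lborel (A i))" .
  qed
  then have "emeasure (MM d) E = emeasure P E" by simp
  also have "\<dots> = ennreal (\<bar>c\<bar>^d) * emeasure (distr (MM d) (MM d) g) E"
    unfolding P_def using E by (simp add: emeasure_density_const)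
  also have "\<dots> = ennreal (\<bar>c\<bar>^d) * emeasure (MM d) (g -` E \<inter> space (MM d))"
    using E gm by (simp add: emeasure_distr)
  also have "g -` E \<inter> space (MM d) = {f \<in> space (MM d). aff d c q f \<in> E}"
    unfolding g_def by auto
  finally show ?thesis .
qed

definition H :: "(nat \<Rightarrow> real) \<Rightarrow> real \<Rightarrow> (nat \<Rightarrow> real) \<Rightarrow> (nat \<Rightarrow> real)" where
  "H p l \<theta> = (\<lambda>i. p i + l * (\<theta> i - p i))"

lemma ext_aff: "p \<in> rvec d \<Longrightarrow> l > 0 \<Longrightarrow>
  ext d (aff d (1/l) (\<lambda>i. p i - p i / l) f) = H p (1/l) (ext d f)"
proof (rule ext)
  fix i assume p: "p \<in> rvec d" and l: "l > 0"
  show "ext d (aff d (1/l) (\<lambda>i. p i - p i / l) f) i = H p (1/l) (ext d f) i"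
    by (cases "i < d") (use p l in \<open>auto simp: ext_def aff_def H_def rvec_def field_simps\<close>)
qed

lemma homothety_vol:
  assumes p: "p \<in> rvec d" and l: "l > 0" and A: "A \<in> sets borel"
  defines "B \<equiv> {\<theta> \<in> rvec d. H p (1/l) \<theta> \<in> A}"
  shows "pre d B \<in> sets (MM d)" "vol d B = l^d * vol d A"
proof -
  define q where "q = (\<lambda>i. p i - p i / l)"
  have eq: "pre d B = {f \<in> space (MM d). aff d (1/l) q f \<in> pre d A}"
  proof (intro set_eqI iffI)
    fix f assume f: "f \<in> pre d B"
    then have fs: "f \<in> space (MM d)" and "H p (1/l) (ext d f) \<in> A" unfolding pre_def B_def by auto
    moreover have "ext d (aff d (1/l) q f) = H p (1/l) (ext d f)"
      unfolding q_def using p l by (rule ext_aff)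
    moreover have "aff d (1/l) q f \<in> space (MM d)" unfolding aff_def by (simp add: space_PiM)
    ultimately show "f \<in> {f \<in> space (MM d). aff d (1/l) q f \<in> pre d A}" unfolding pre_def by simp
  next
    fix f assume f: "f \<in> {f \<in> space (MM d). aff d (1/l) q f \<in> pre d A}"
    then have fs: "f \<in> space (MM d)" and "ext d (aff d (1/l) q f) \<in> A" unfolding pre_def by auto
    moreover have "ext d (aff d (1/l) q f) = H p (1/l) (ext d f)"
      unfolding q_def using p l by (rule ext_aff)
    moreover have "ext d f \<in> rvec d" unfolding ext_def rvec_def by simp
    ultimately show "f \<in> pre d B" unfolding pre_def B_def by simp
  qed
  have pA: "pre d A \<in> sets (MM d)" using A by (rule pre_sets)
  have "aff d (1/l) q -` pre d A \<inter> space (MM d) \<in> sets (MM d)"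
    using aff_measurable pA by (rule measurable_sets)
  moreover have "aff d (1/l) q -` pre d A \<inter> space (MM d) = pre d B" unfolding eq by auto
  ultimately show "pre d B \<in> sets (MM d)" by simp
  have "emeasure (MM d) (pre d A) = ennreal (\<bar>1/l\<bar>^d) * emeasure (MM d) (pre d B)"
    unfolding eq using l pA by (intro affine_scaling) auto
  then have "ennreal (l^d) * emeasure (MM d) (pre d A) = ennreal (l^d) * ennreal ((1/l)^d) * emeasure (MM d) (pre d B)"
    using l by (simp add: mult.assoc)
  also have "ennreal (l^d) * ennreal ((1/l)^d) = 1"
    using l by (simp add: ennreal_mult'[symmetric] power_mult_distrib[symmetric])
  finally have "emeasure (MM d) (pre d B) = ennreal (l^d) * emeasure (MM d) (pre d A)" by simp
  then show "vol d B = l^d * vol d A"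
    unfolding vol_pre measure_def using l by (simp add: enn2real_mult)
qed

lemma rball_L2: "rball d r = {\<theta>\<in>rvec d. L2_set \<theta> {..<d} \<le> r}"
  by (simp add: rball_def L2_set_def)

lemma ip_abs_le: "\<bar>ip d a b\<bar> \<le> L2_set a {..<d} * L2_set b {..<d}"
proof -
  have "\<bar>ip d a b\<bar> \<le> (\<Sum>i<d. \<bar>a i * b i\<bar>)" unfolding ip_def by (rule sum_abs)
  also have "\<dots> = (\<Sum>i<d. \<bar>a i\<bar> * \<bar>b i\<bar>)" by (simp add: abs_mult)
  also have "\<dots> \<le> L2_set a {..<d} * L2_set b {..<d}" by (rule L2_set_mult_ineq)
  finally show ?thesis .
qed

lemma ip_rball_le: "b \<in> rball d r \<Longrightarrow> x \<in> rball d 1 \<Longrightarrow> ip d b x \<le> r"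
proof -
  assume b: "b \<in> rball d r" and x: "x \<in> rball d 1"
  have "ip d b x \<le> L2_set b {..<d} * L2_set x {..<d}" using ip_abs_le[of d b x] by simp
  also have "\<dots> \<le> r * 1"
    using b x unfolding rball_L2 by (intro mult_mono) (auto intro: order_trans[OF L2_set_nonneg])
  finally show ?thesis by simp
qed

lemma ip_add: "ip d (\<lambda>i. a i + b i) x = ip d a x + ip d b x"
  unfolding ip_def by (simp add: algebra_simps sum.distrib)

lemma ip_diff: "ip d (\<lambda>i. a i - b i) x = ip d a x - ip d b x"
  unfolding ip_def by (simp add: algebra_simps sum_subtractf)

lemma ip_H: "ip d (H p l q) x = ip d p x + l * (ip d q x - ip d p x)"
  unfolding ip_def H_def by (simp add: algebra_simps sum.distrib sum_subtractf sum_distrib_left)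

lemma ip_neg: "ip d a (\<lambda>i. - x i) = - ip d a x"
  unfolding ip_def by (simp add: sum_negf)

lemma rball_comp: "\<theta> \<in> rball d r \<Longrightarrow> i < d \<Longrightarrow> \<bar>\<theta> i\<bar> \<le> r"
proof -
  assume t: "\<theta> \<in> rball d r" and i: "i < d"
  have "\<bar>\<theta> i\<bar> = sqrt ((\<theta> i)\<^sup>2)" by simp
  also have "\<dots> \<le> sqrt (\<Sum>j<d. (\<theta> j)\<^sup>2)"
    using i by (intro real_sqrt_le_mono member_le_sum) auto
  also have "\<dots> \<le> r" using t unfolding rball_def by simp
  finally show ?thesis .
qed

lemma rball_cube: "rball d r \<subseteq> cube d (\<lambda>_. 0) r"
  unfolding cube_def using rball_comp by (auto simp: rball_def)

definition cvx :: "(nat \<Rightarrow> real) set \<Rightarrow> bool" where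
  "cvx S \<longleftrightarrow> (\<forall>a\<in>S. \<forall>b\<in>S. \<forall>l. 0 \<le> l \<longrightarrow> l \<le> 1 \<longrightarrow> H a l b \<in> S)"

lemma cvxD: "cvx S \<Longrightarrow> a \<in> S \<Longrightarrow> b \<in> S \<Longrightarrow> 0 \<le> l \<Longrightarrow> l \<le> 1 \<Longrightarrow> H a l b \<in> S"
  unfolding cvx_def by blast

lemma H_alt: "H a l b = (\<lambda>i. (1 - l) * a i + l * b i)"
  unfolding H_def by (auto simp: algebra_simps)

lemma L2_H_le:
  assumes "0 \<le> l" "l \<le> 1"
  shows "L2_set (H a l b) I \<le> (1 - l) * L2_set a I + l * L2_set b I"
proof -
  have "L2_set (H a l b) I \<le> L2_set (\<lambda>i. (1 - l) * a i) I + L2_set (\<lambda>i. l * b i) I"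
    unfolding H_alt by (rule L2_set_triangle_ineq)
  also have "\<dots> = (1 - l) * L2_set a I + l * L2_set b I"
    using assms by (simp add: L2_set_right_distrib)
  finally show ?thesis .
qed

lemma cvx_rball: "cvx (rball d r)"
  unfolding cvx_def
proof (intro ballI allI impI)
  fix a b and l :: real assume a: "a \<in> rball d r" and b: "b \<in> rball d r" and l: "0 \<le> l" "l \<le> 1"
  have "L2_set (H a l b) {..<d} \<le> (1 - l) * L2_set a {..<d} + l * L2_set b {..<d}"
    using l by (rule L2_H_le)
  also have "\<dots> \<le> (1 - l) * r + l * r"
    using a b l unfolding rball_L2 by (intro add_mono mult_left_mono) auto
  finally have "L2_set (H a l b) {..<d} \<le> r" by (simp add: algebra_simps)
  moreover have "H a l b \<in> rvec d" using a b unfolding rball_def rvec_def H_def by auto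
  ultimately show "H a l b \<in> rball d r" unfolding rball_L2 by simp
qed

lemma cvx_Int_le: "cvx S \<Longrightarrow> cvx {\<theta>\<in>S. ip d \<theta> x \<le> y}"
  unfolding cvx_def
proof (intro ballI allI impI)
  fix a b and l :: real assume S: "\<forall>a\<in>S. \<forall>b\<in>S. \<forall>l. 0 \<le> l \<longrightarrow> l \<le> 1 \<longrightarrow> H a l b \<in> S"
    and a: "a \<in> {\<theta> \<in> S. ip d \<theta> x \<le> y}" and b: "b \<in> {\<theta> \<in> S. ip d \<theta> x \<le> y}" and l: "0 \<le> l" "l \<le> 1"
  have "ip d (H a l b) x = (1 - l) * ip d a x + l * ip d b x" unfolding ip_H by (simp add: algebra_simps)
  also have "\<dots> \<le> (1 - l) * y + l * y" using a b l by (intro add_mono mult_left_mono) auto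
  finally show "H a l b \<in> {\<theta> \<in> S. ip d \<theta> x \<le> y}" using S a b l by (auto simp: algebra_simps)
qed

lemma cvx_Int_ge: "cvx S \<Longrightarrow> cvx {\<theta>\<in>S. ip d \<theta> x \<ge> y}"
  unfolding cvx_def
proof (intro ballI allI impI)
  fix a b and l :: real assume S: "\<forall>a\<in>S. \<forall>b\<in>S. \<forall>l. 0 \<le> l \<longrightarrow> l \<le> 1 \<longrightarrow> H a l b \<in> S"
    and a: "a \<in> {\<theta> \<in> S. ip d \<theta> x \<ge> y}" and b: "b \<in> {\<theta> \<in> S. ip d \<theta> x \<ge> y}" and l: "0 \<le> l" "l \<le> 1"
  have "(1 - l) * y + l * y \<le> (1 - l) * ip d a x + l * ip d b x"
    using a b l by (intro add_mono mult_left_mono) auto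
  also have "\<dots> = ip d (H a l b) x" unfolding ip_H by (simp add: algebra_simps)
  finally show "H a l b \<in> {\<theta> \<in> S. ip d \<theta> x \<ge> y}" using S a b l by (auto simp: algebra_simps)
qed


lemma cont_coord[continuous_intros]: "continuous_on S (\<lambda>\<theta>::nat\<Rightarrow>real. \<theta> i)"
  by (rule continuous_on_subset[OF continuous_on_product_coordinates]) simp

lemma cont_ip[continuous_intros]: "continuous_on S (\<lambda>\<theta>. ip d \<theta> x)"
  unfolding ip_def by (intro continuous_intros)

lemma closed_rvec: "closed (rvec d)"
proof -
  have "rvec d = (\<Inter>i\<in>{d..}. {\<theta>. \<theta> i = 0})" unfolding rvec_def by auto
  moreover have "closed {\<theta>::nat\<Rightarrow>real. \<theta> i = 0}" for i
    by (intro closed_Collect_eq continuous_intros)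
  ultimately show ?thesis by auto
qed

lemma closed_rball: "closed (rball d r)"
proof -
  have "rball d r = rvec d \<inter> {\<theta>. sqrt (\<Sum>i<d. (\<theta> i)\<^sup>2) \<le> r}" unfolding rball_def by auto
  moreover have "closed {\<theta>::nat\<Rightarrow>real. sqrt (\<Sum>i<d. (\<theta> i)\<^sup>2) \<le> r}"
    by (intro closed_Collect_le continuous_intros)
  ultimately show ?thesis using closed_rvec by auto
qed

lemma closed_le: "closed S \<Longrightarrow> closed {\<theta>\<in>S. ip d \<theta> x \<le> y}"
proof -
  assume "closed S"
  moreover have "closed {\<theta>. ip d \<theta> x \<le> y}" by (intro closed_Collect_le continuous_intros)
  moreover have "{\<theta>\<in>S. ip d \<theta> x \<le> y} = S \<inter> {\<theta>. ip d \<theta> x \<le> y}" by auto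
  ultimately show ?thesis by auto
qed

lemma closed_ge: "closed S \<Longrightarrow> closed {\<theta>\<in>S. ip d \<theta> x \<ge> y}"
proof -
  assume "closed S"
  moreover have "closed {\<theta>. y \<le> ip d \<theta> x}" by (intro closed_Collect_le continuous_intros)
  moreover have "{\<theta>\<in>S. ip d \<theta> x \<ge> y} = S \<inter> {\<theta>. y \<le> ip d \<theta> x}" by auto
  ultimately show ?thesis by auto
qed

lemma borel_lt: "closed S \<Longrightarrow> {\<theta>\<in>S. ip d \<theta> x < y} \<in> sets borel"
proof -
  assume "closed S"
  moreover have "open {\<theta>. ip d \<theta> x < y}" by (intro open_Collect_less continuous_intros)
  moreover have "{\<theta>\<in>S. ip d \<theta> x < y} = S \<inter> {\<theta>. ip d \<theta> x < y}" by auto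
  ultimately show ?thesis by auto
qed

lemma compact_rball: "compact (rball d r)"
proof (cases "r \<ge> 0")
  case True
  define B where "B = Pi\<^sub>E UNIV (\<lambda>i::nat. if i < d then {-r..r} else {0::real})"
  have "compactin (product_topology (\<lambda>_. euclidean) UNIV) B"
    unfolding B_def compactin_PiE by auto
  then have "compact B" by (simp add: euclidean_product_topology)
  moreover have "rball d r = B \<inter> rball d r"
  proof -
    have "rball d r \<subseteq> B"
    proof
      fix \<theta> assume t: "\<theta> \<in> rball d r"
      have "\<theta> i \<in> (if i < d then {-r..r} else {0})" for i
        using rball_comp[OF t, of i] t unfolding rball_def rvec_def by (auto simp: abs_le_iff)
      then show "\<theta> \<in> B" unfolding B_def by auto
    qed
    then show ?thesis by auto
  qed
  ultimately show ?thesis using closed_rball by (metis compact_Int_closed)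
next
  case False
  have "\<And>\<theta>::nat\<Rightarrow>real. 0 \<le> sqrt (\<Sum>i<d. (\<theta> i)\<^sup>2)" by (simp add: sum_nonneg)
  have "rball d r = {}"
  proof (rule equals0I)
    fix \<theta> assume "\<theta> \<in> rball d r"
    then have "sqrt (\<Sum>i<d. (\<theta> i)\<^sup>2) \<le> r" unfolding rball_def by simp
    with \<open>\<And>\<theta>. 0 \<le> sqrt (\<Sum>i<d. (\<theta> i)\<^sup>2)\<close>[of \<theta>] False show False by linarith
  qed
  then show ?thesis by simp
qed

section \<open>Knowledge sets\<close>

lemma know_sub: "knowledge d ths thb x y (Suc t) \<subseteq> knowledge d ths thb x y t"
  by (auto simp: Let_def)

lemma know_mono: "s \<le> t \<Longrightarrow> knowledge d ths thb x y t \<subseteq> knowledge d ths thb x y s"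
proof (induction t rule: dec_induct)
  case base
  then show ?case by simp
next
  case (step n)
  then show ?case using know_sub[of d ths thb x y n] by blast
qed

lemma know_rball: "knowledge d ths thb x y t \<subseteq> rball d 1"
  using know_mono[of 0 t d ths thb x y] by simp

lemma know_mem:
  assumes "ths \<in> rball d 1" "thb \<in> rball d 1"
  shows "ths \<in> knowledge d ths thb x y t \<and> thb \<in> knowledge d ths thb x y t"
proof (induction t)
  case 0
  then show ?case using assms by simp
next
  case (Suc t)
  then show ?case by (auto simp: Let_def)
qed

lemma know_cvx: "cvx (knowledge d ths thb x y t)"
proof (induction t)
  case 0
  then show ?case by (simp add: cvx_rball)
next
  case (Suc t)
  then show ?case by (simp add: Let_def cvx_Int_le cvx_Int_ge)
qed

lemma know_closed: "closed (knowledge d ths thb x y t)"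
proof (induction t)
  case 0
  then show ?case by (simp add: closed_rball)
next
  case (Suc t)
  then show ?case by (simp add: Let_def closed_le closed_ge)
qed

section \<open>Minkowski sums\<close>

lemma mink_mono: "A \<subseteq> B \<Longrightarrow> mink d A r \<subseteq> mink d B r"
  unfolding mink_def by blast

lemma minkE: "\<theta> \<in> mink d A r \<Longrightarrow> (\<And>a b. a \<in> A \<Longrightarrow> b \<in> rball d r \<Longrightarrow> \<theta> = (\<lambda>i. a i + b i) \<Longrightarrow> P) \<Longrightarrow> P"
  unfolding mink_def by blast

lemma zero_rball: "r \<ge> 0 \<Longrightarrow> (\<lambda>_. 0) \<in> rball d r"
  unfolding rball_def rvec_def by simp

lemma mink_sup: "r \<ge> 0 \<Longrightarrow> A \<subseteq> mink d A r"
proof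
  fix a assume "r \<ge> 0" "a \<in> A"
  then have z: "(\<lambda>_. 0) \<in> rball d r" "a \<in> A" using zero_rball by auto
  show "a \<in> mink d A r" unfolding mink_def mem_Collect_eq
    by (rule exI[of _ a], rule exI[of _ "\<lambda>_. 0"]) (use z in simp)
qed

lemma mink_rball: "A \<subseteq> rball d R \<Longrightarrow> mink d A r \<subseteq> rball d (R + r)"
proof
  fix \<theta> assume A: "A \<subseteq> rball d R" and t: "\<theta> \<in> mink d A r"
  then obtain a b where a: "a \<in> rball d R" and b: "b \<in> rball d r" and th: "\<theta> = (\<lambda>i. a i + b i)"
    by (auto elim!: minkE)
  have "L2_set \<theta> {..<d} \<le> L2_set a {..<d} + L2_set b {..<d}" unfolding th by (rule L2_set_triangle_ineq)
  also have "\<dots> \<le> R + r" using a b unfolding rball_L2 by simp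
  finally show "\<theta> \<in> rball d (R + r)" using a b unfolding th rball_L2 rvec_def by auto
qed

lemma mink_cvx: "cvx A \<Longrightarrow> cvx (mink d A r)"
  unfolding cvx_def
proof (intro ballI allI impI)
  fix u v and l :: real assume A: "\<forall>a\<in>A. \<forall>b\<in>A. \<forall>l. 0 \<le> l \<longrightarrow> l \<le> 1 \<longrightarrow> H a l b \<in> A"
    and u: "u \<in> mink d A r" and v: "v \<in> mink d A r" and l: "0 \<le> l" "l \<le> 1"
  obtain a1 b1 where 1: "a1 \<in> A" "b1 \<in> rball d r" "u = (\<lambda>i. a1 i + b1 i)" using u by (auto elim!: minkE)
  obtain a2 b2 where 2: "a2 \<in> A" "b2 \<in> rball d r" "v = (\<lambda>i. a2 i + b2 i)" using v by (auto elim!: minkE)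
  have "H a1 l a2 \<in> A" using A 1 2 l by blast
  moreover have "H b1 l b2 \<in> rball d r" using cvx_rball 1 2 l unfolding cvx_def by blast
  moreover have "H u l v = (\<lambda>i. H a1 l a2 i + H b1 l b2 i)" unfolding 1 2 H_def by (auto simp: algebra_simps)
  ultimately show "H u l v \<in> mink d A r" unfolding mink_def by blast
qed

lemma mink_closed:
  assumes "closed A" "A \<subseteq> rball d R"
  shows "closed (mink d A r)"
proof -
  have cA: "compact A"
  proof -
    have "A = rball d R \<inter> A" using assms(2) by auto
    then show ?thesis using compact_rball assms(1) by (metis compact_Int_closed)
  qed
  have "compact (A \<times> rball d r)" using cA compact_rball by (rule compact_Times)
  moreover have "continuous_on (A \<times> rball d r) (\<lambda>z. (\<lambda>i. fst z i + snd z i))"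
  proof (rule continuous_on_coordinatewise_then_product)
    fix i
    have "continuous_on (A \<times> rball d r) (\<lambda>z. fst z i)"
      using continuous_on_compose2[OF cont_coord[of UNIV i] continuous_on_fst[OF continuous_on_id]] by simp
    moreover have "continuous_on (A \<times> rball d r) (\<lambda>z. snd z i)"
      using continuous_on_compose2[OF cont_coord[of UNIV i] continuous_on_snd[OF continuous_on_id]] by simp
    ultimately show "continuous_on (A \<times> rball d r) (\<lambda>z. fst z i + snd z i)"
      by (rule continuous_on_add)
  qed
  ultimately have "compact ((\<lambda>z. (\<lambda>i. fst z i + snd z i)) ` (A \<times> rball d r))"
    by (rule compact_continuous_image[rotated])
  moreover have "(\<lambda>z. (\<lambda>i. fst z i + snd z i)) ` (A \<times> rball d r) = mink d A r"
    unfolding mink_def by force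
  ultimately show ?thesis by (metis compact_imp_closed)
qed

lemma mink_cube:
  assumes "a \<in> A" "A \<subseteq> rvec d" "r \<ge> 0" "d \<ge> 1"
  shows "cube d a (r / d) \<subseteq> mink d A r"
proof
  fix \<theta> assume t: "\<theta> \<in> cube d a (r / d)"
  define b where "b = (\<lambda>i. \<theta> i - a i)"
  have "b \<in> rvec d" using t assms(1,2) unfolding b_def cube_def rvec_def by auto
  moreover have "L2_set b {..<d} \<le> r"
  proof -
    have "L2_set b {..<d} \<le> (\<Sum>i<d. \<bar>b i\<bar>)" by (rule L2_set_le_sum_abs)
    also have "\<dots> \<le> (\<Sum>i<d. r / d)" using t unfolding cube_def b_def by (intro sum_mono) auto
    also have "\<dots> = r" using assms(4) by simp
    finally show ?thesis .
  qed
  ultimately have "b \<in> rball d r" unfolding rball_L2 by simp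
  moreover have "\<theta> = (\<lambda>i. a i + b i)" unfolding b_def by auto
  ultimately show "\<theta> \<in> mink d A r" unfolding mink_def using assms(1) by blast
qed

lemma mink_level_le:
  assumes "\<theta> \<in> mink d A r" "\<forall>a\<in>A. ip d a x \<le> y" "x \<in> rball d 1"
  shows "ip d \<theta> x \<le> y + r"
proof -
  obtain a b where ab: "a \<in> A" "b \<in> rball d r" "\<theta> = (\<lambda>i. a i + b i)" using assms(1) by (auto elim!: minkE)
  have "ip d \<theta> x = ip d a x + ip d b x" unfolding ab by (rule ip_add)
  also have "\<dots> \<le> y + r" using assms(2) ab ip_rball_le[OF ab(2) assms(3)] by (intro add_mono) auto
  finally show ?thesis .
qed

lemma mink_level_ge:
  assumes "\<theta> \<in> mink d A r" "\<forall>a\<in>A. ip d a x \<ge> y" "x \<in> rball d 1"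
  shows "ip d \<theta> x \<ge> y - r"
proof -
  obtain a b where ab: "a \<in> A" "b \<in> rball d r" "\<theta> = (\<lambda>i. a i + b i)" using assms(1) by (auto elim!: minkE)
  have nb: "(\<lambda>i. - b i) \<in> rball d r" using ab(2) unfolding rball_def rvec_def by auto
  have "- ip d b x = ip d (\<lambda>i. - b i) x" unfolding ip_def by (simp add: sum_negf)
  also have "\<dots> \<le> r" using ip_rball_le[OF nb assms(3)] .
  finally have "ip d b x \<ge> - r" by simp
  moreover have "ip d \<theta> x = ip d a x + ip d b x" unfolding ab by (rule ip_add)
  ultimately show ?thesis using assms(2) ab by force
qed

section \<open>Slab lemma\<close>

lemma vol_nonneg: "0 \<le> vol d S" by (simp add: vol_pre)

lemma vol_mono:
  assumes "S \<subseteq> T" "pre d S \<in> sets (MM d)" "T \<in> sets borel" "T \<subseteq> rball d R" "R \<ge> 0"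
  shows "vol d S \<le> vol d T"
  unfolding vol_pre
  by (rule measure_mono_fmeasurable[OF pre_mono[OF assms(1)] assms(2)
        pre_fmeasurable[OF assms(3) order_trans[OF assms(4) rball_cube] assms(5)]])

lemma geo_limit:
  fixes a U q :: real
  assumes "0 \<le> q" "q < 1" "0 \<le> a" "\<And>N. a * (1 - q^N) \<le> U"
  shows "a \<le> U"
proof (rule ccontr)
  assume "\<not> a \<le> U"
  then have aU: "a - U > 0" by simp
  then have pos: "(a - U) / (a + 1) > 0" using assms(3) by simp
  obtain N where N: "q^N < (a - U) / (a + 1)" using real_arch_pow_inv[OF pos assms(2)] by blast
  have "a * q^N \<le> (a + 1) * q^N" using assms(1) by (simp add: mult_right_mono)
  also have "\<dots> < a - U" using N assms(3) by (simp add: field_simps)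
  finally have "U < a * (1 - q^N)" by (simp add: algebra_simps)
  with assms(4)[of N] show False by simp
qed

lemma H_inv: "l \<noteq> 0 \<Longrightarrow> H p l (H p (1/l) \<theta>) = \<theta>"
  unfolding H_def by (auto simp: field_simps)

lemma slab_side:
  fixes x :: "nat \<Rightarrow> real"
  assumes Kc: "cvx K" and Kcl: "closed K" and KR: "K \<subseteq> rball d R" and R: "R \<ge> 0" and d: "d \<ge> 1"
    and p: "p \<in> K" and e: "0 \<le> e" "e < e'"
  shows "vol d {\<theta>\<in>K. s \<le> ip d \<theta> x \<and> ip d \<theta> x \<le> s + e} * (ip d p x - s)
           \<le> real d * e' * vol d {\<theta>\<in>K. s \<le> ip d \<theta> x}"
proof -
  define S where "S = {\<theta>\<in>K. s \<le> ip d \<theta> x \<and> ip d \<theta> x \<le> s + e}"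
  define U where "U = {\<theta>\<in>K. s \<le> ip d \<theta> x}"
  define t0 where "t0 = ip d p x - s"
  have Ucl: "closed U" unfolding U_def using Kcl by (rule closed_ge)
  have "S = {\<theta>\<in>U. ip d \<theta> x \<le> s + e}" unfolding S_def U_def by auto
  then have Scl: "closed S" using Ucl by (simp add: closed_le)
  have Sb: "S \<in> sets borel" "U \<in> sets borel" using Scl Ucl by auto
  have SU: "S \<subseteq> U" unfolding S_def U_def by auto
  have UR: "U \<subseteq> rball d R" using KR unfolding U_def by auto
  have vSU: "vol d S \<le> vol d U" by (rule vol_mono[OF SU pre_sets[OF Sb(1)] Sb(2) UR R])
  have vS0: "0 \<le> vol d S" and vU0: "0 \<le> vol d U" by (rule vol_nonneg)+
  have dd: "(1::real) \<le> real d" using d by simp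
  show ?thesis
  proof (cases "t0 \<le> e'")
    case True
    have "vol d S * t0 \<le> vol d S * e'" using True vS0 by (rule mult_left_mono)
    also have "\<dots> \<le> vol d U * e'" using vSU e by (intro mult_right_mono) auto
    also have "\<dots> \<le> real d * e' * vol d U" using dd e vU0
      by (metis mult.commute mult_left_mono mult_cancel_right1 mult_right_mono order_less_imp_le order_trans)
    finally show ?thesis unfolding S_def U_def t0_def .
  next
    case False
    then have t0: "t0 > e'" by simp
    then have t0p: "t0 > 0" using e by simp
    define r where "r = (t0 - e') / t0"
    have r0: "0 < r" and r1: "r < 1" using t0 t0p e unfolding r_def by (auto simp: field_simps)
    have rt: "r * t0 = t0 - e'" unfolding r_def using t0p by simp
    have prv: "p \<in> rvec d" using p KR unfolding rball_def by auto
    define A where "A k = {\<theta> \<in> rvec d. H p (1 / r^k) \<theta> \<in> S}" for k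
    have pA: "pre d (A k) \<in> sets (MM d)" and vA: "vol d (A k) = (r^k)^d * vol d S" for k
      unfolding A_def using homothety_vol[OF prv _ Sb(1), of "r^k"] r0 by auto
    have lvA: "r^(Suc k) * t0 < ip d p x - ip d \<theta> x \<and> ip d p x - ip d \<theta> x \<le> r^k * t0"
      if th: "\<theta> \<in> A k" for \<theta> k
    proof -
      define l where "l = r^k"
      have l0: "l > 0" unfolding l_def using r0 by simp
      define \<theta>' where "\<theta>' = H p (1/l) \<theta>"
      have t': "\<theta>' \<in> S" using th unfolding A_def \<theta>'_def l_def by auto
      have "ip d \<theta>' x = ip d p x + (1/l) * (ip d \<theta> x - ip d p x)" unfolding \<theta>'_def by (rule ip_H)
      then have eq: "ip d p x - ip d \<theta> x = l * (ip d p x - ip d \<theta>' x)" using l0 by (simp add: field_simps)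
      have b1: "t0 - e \<le> ip d p x - ip d \<theta>' x" "ip d p x - ip d \<theta>' x \<le> t0"
        using t' unfolding S_def t0_def by auto
      have "r^(Suc k) * t0 = l * (t0 - e')" unfolding l_def using rt by (simp add: mult.assoc mult.commute)
      also have "\<dots> < l * (t0 - e)" using l0 e by simp
      also have "\<dots> \<le> l * (ip d p x - ip d \<theta>' x)" using l0 b1 by simp
      finally have "r^(Suc k) * t0 < ip d p x - ip d \<theta> x" unfolding eq .
      moreover have "ip d p x - ip d \<theta> x \<le> r^k * t0" unfolding eq l_def using b1 r0 by simp
      ultimately show ?thesis by simp
    qed
    have AU: "A k \<subseteq> U" for k
    proof
      fix \<theta> assume th: "\<theta> \<in> A k"
      define l where "l = r^k"
      have l0: "l > 0" and l1: "l \<le> 1" unfolding l_def using r0 r1 by (auto simp: power_le_one)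
      have t': "H p (1/l) \<theta> \<in> K" using th unfolding A_def S_def l_def by auto
      have "H p l (H p (1/l) \<theta>) \<in> K" using cvxD[OF Kc p t'] l0 l1 by simp
      then have "\<theta> \<in> K" using H_inv[of l p \<theta>] l0 by simp
      moreover have "ip d p x - ip d \<theta> x \<le> t0"
      proof -
        have "ip d p x - ip d \<theta> x \<le> r^k * t0" using lvA[OF th] by simp
        also have "\<dots> \<le> 1 * t0" using r0 r1 t0p by (intro mult_right_mono) (auto simp: power_le_one)
        finally show ?thesis by simp
      qed
      ultimately show "\<theta> \<in> U" unfolding U_def t0_def by auto
    qed
    have disj: "A j \<inter> A k = {}" if "j < k" for j k
    proof (rule equals0I)
      fix \<theta> assume "\<theta> \<in> A j \<inter> A k"
      then have "r^(Suc j) * t0 < ip d p x - ip d \<theta> x" "ip d p x - ip d \<theta> x \<le> r^k * t0"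
        using lvA by blast+
      moreover have "r^k \<le> r^(Suc j)" using that r0 r1 by (intro power_decreasing) auto
      ultimately show False using t0p by (smt (verit) mult_right_mono)
    qed
    have sumle: "(\<Sum>k<N. vol d (A k)) \<le> vol d U" for N
    proof -
      have fin: "emeasure (MM d) (pre d (A k)) \<noteq> \<infinity>" for k
      proof -
        have "pre d (A k) \<in> fmeasurable (MM d)"
          by (rule fmeasurableI2[OF pre_fmeasurable[OF Sb(2) order_trans[OF UR rball_cube] R] pre_mono[OF AU] pA])
        then show ?thesis by (simp add: fmeasurable_def less_top)
      qed
      have dj: "disjoint_family_on (\<lambda>k. pre d (A k)) {..<N}"
        unfolding disjoint_family_on_def
      proof (intro ballI impI)
        fix j k assume "j \<in> {..<N}" "k \<in> {..<N}" "j \<noteq> k"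
        then have "A j \<inter> A k = {}" using disj[of j k] disj[of k j] by (cases "j < k") auto
        then show "pre d (A j) \<inter> pre d (A k) = {}" unfolding pre_def by auto
      qed
      have "(\<Sum>k<N. vol d (A k)) = measure (MM d) (\<Union>k\<in>{..<N}. pre d (A k))"
        unfolding vol_pre using pA dj fin by (intro measure_finite_Union[symmetric]) auto
      also have "\<dots> \<le> measure (MM d) (pre d U)"
      proof (rule measure_mono_fmeasurable)
        show "(\<Union>k\<in>{..<N}. pre d (A k)) \<subseteq> pre d U" using AU pre_mono by blast
        show "(\<Union>k\<in>{..<N}. pre d (A k)) \<in> sets (MM d)" using pA by auto
        show "pre d U \<in> fmeasurable (MM d)" by (rule pre_fmeasurable[OF Sb(2) order_trans[OF UR rball_cube] R])
      qed
      finally show ?thesis unfolding vol_pre .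
    qed
    define q where "q = r^d"
    have q0: "0 \<le> q" and q1: "q < 1" unfolding q_def using r0 r1 d by (auto simp: power_less_one_iff)
    have "vol d S \<le> (1 - q) * vol d U"
    proof (rule geo_limit[OF q0 q1 vS0])
      fix N
      have "(\<Sum>k<N. vol d (A k)) = (\<Sum>k<N. q^k) * vol d S"
        unfolding vA q_def by (simp add: sum_distrib_right sum_distrib_left power_mult[symmetric] mult.commute)
      also have "(\<Sum>k<N. q^k) = (1 - q^N) / (1 - q)" using q1 by (simp add: sum_gp_strict)
      finally have "(1 - q^N) / (1 - q) * vol d S \<le> vol d U" using sumle[of N] by simp
      then have "(1 - q^N) * vol d S \<le> (1 - q) * vol d U" using q1 by (simp add: field_simps)
      then show "vol d S * (1 - q^N) \<le> (1 - q) * vol d U" by (simp add: mult.commute)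
    qed
    moreover have "1 - q \<le> real d * (1 - r)"
    proof -
      have "1 + real d * (r - 1) \<le> (1 + (r - 1))^d" using r0 by (intro Bernoulli_inequality) simp
      then show ?thesis unfolding q_def by (simp add: algebra_simps)
    qed
    ultimately have "vol d S \<le> real d * (1 - r) * vol d U" using vU0
      by (meson mult_right_mono order_trans)
    also have "real d * (1 - r) = real d * e' / t0" unfolding r_def using t0p by (simp add: field_simps)
    finally have "vol d S * t0 \<le> real d * e' * vol d U" using t0p by (simp add: field_simps)
    then show ?thesis unfolding S_def U_def t0_def .
  qed
qed

lemma pre_Un: "pre d (A \<union> B) = pre d A \<union> pre d B" unfolding pre_def by auto
lemma pre_Int: "pre d (A \<inter> B) = pre d A \<inter> pre d B" unfolding pre_def by auto

lemma fin_em: "A \<in> sets borel \<Longrightarrow> A \<subseteq> rball d R \<Longrightarrow> R \<ge> 0 \<Longrightarrow> emeasure (MM d) (pre d A) \<noteq> \<infinity>"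
  using pre_fmeasurable[OF _ order_trans[OF _ rball_cube]] by (simp add: fmeasurable_def less_top)

lemma vol_disj_Un:
  assumes "A \<in> sets borel" "B \<in> sets borel" "A \<inter> B = {}" "A \<subseteq> rball d R" "B \<subseteq> rball d R" "R \<ge> 0"
  shows "vol d (A \<union> B) = vol d A + vol d B"
  unfolding vol_pre pre_Un
proof (rule measure_Union)
  show "emeasure (MM d) (pre d A) \<noteq> \<infinity>" using assms by (intro fin_em) auto
  show "emeasure (MM d) (pre d B) \<noteq> \<infinity>" using assms by (intro fin_em) auto
  show "pre d A \<in> sets (MM d)" "pre d B \<in> sets (MM d)" using assms by (auto intro: pre_sets)
  show "pre d A \<inter> pre d B = {}" using assms(3) unfolding pre_def by auto
qed

lemma vol_Un_le:
  assumes "A \<in> sets borel" "B \<in> sets borel"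
  shows "vol d (A \<union> B) \<le> vol d A + vol d B"
  unfolding vol_pre pre_Un using assms by (intro measure_Un_le) (auto intro: pre_sets)

lemma slab_bound:
  fixes x :: "nat \<Rightarrow> real"
  assumes Kc: "cvx K" and Kcl: "closed K" and KR: "K \<subseteq> rball d R" and R: "R \<ge> 0" and d: "d \<ge> 1"
    and p: "p \<in> K" and q: "q \<in> K" and e: "0 \<le> e" and gap: "4 * real d * e < ip d p x - ip d q x"
  shows "vol d {\<theta>\<in>K. s \<le> ip d \<theta> x \<and> ip d \<theta> x \<le> s + e} \<le> vol d K / 3"
proof -
  define S where "S = {\<theta>\<in>K. s \<le> ip d \<theta> x \<and> ip d \<theta> x \<le> s + e}"
  define b where "b = ip d p x"
  define a where "a = ip d q x"
  have dp: "real d > 0" using d by simp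
  define e' where "e' = e + (b - a - 4 * real d * e) / (4 * real d)"
  have ee: "e < e'" unfolding e'_def using gap dp unfolding a_def b_def by (simp add: field_simps)
  have e'eq: "4 * real d * e' = b - a" unfolding e'_def using dp by (simp add: field_simps)
  have i1: "vol d S * (b - s) \<le> real d * e' * vol d {\<theta>\<in>K. s \<le> ip d \<theta> x}"
    unfolding S_def b_def by (rule slab_side[OF Kc Kcl KR R d p e ee])
  have i2: "vol d {\<theta>\<in>K. - (s + e) \<le> ip d \<theta> (\<lambda>i. - x i) \<and> ip d \<theta> (\<lambda>i. - x i) \<le> - (s + e) + e}
      * (ip d q (\<lambda>i. - x i) - - (s + e)) \<le> real d * e' * vol d {\<theta>\<in>K. - (s + e) \<le> ip d \<theta> (\<lambda>i. - x i)}"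
    by (rule slab_side[OF Kc Kcl KR R d q e ee])
  have E1: "{\<theta>\<in>K. - (s + e) \<le> ip d \<theta> (\<lambda>i. - x i) \<and> ip d \<theta> (\<lambda>i. - x i) \<le> - (s + e) + e} = S"
    unfolding S_def ip_neg by auto
  have E2: "{\<theta>\<in>K. - (s + e) \<le> ip d \<theta> (\<lambda>i. - x i)} = {\<theta>\<in>K. ip d \<theta> x \<le> s + e}"
    unfolding ip_neg by auto
  have E3: "ip d q (\<lambda>i. - x i) - - (s + e) = s + e - a" unfolding ip_neg a_def by simp
  have i2': "vol d S * (s + e - a) \<le> real d * e' * vol d {\<theta>\<in>K. ip d \<theta> x \<le> s + e}"
    using i2 unfolding E1 E2 E3 .
  have KRs: "\<And>P. {\<theta>\<in>K. P \<theta>} \<subseteq> rball d R" using KR by auto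
  have b1: "{\<theta>\<in>K. s \<le> ip d \<theta> x} \<in> sets borel" using closed_ge[OF Kcl] by auto
  have b2: "{\<theta>\<in>K. ip d \<theta> x < s} \<in> sets borel" using borel_lt[OF Kcl] by auto
  have b3: "S \<in> sets borel"
  proof -
    have "S = {\<theta>\<in>{\<theta>\<in>K. s \<le> ip d \<theta> x}. ip d \<theta> x \<le> s + e}" unfolding S_def by auto
    then show ?thesis using closed_le[OF closed_ge[OF Kcl]] by auto
  qed
  have "vol d K = vol d ({\<theta>\<in>K. s \<le> ip d \<theta> x} \<union> {\<theta>\<in>K. ip d \<theta> x < s})"
    by (rule arg_cong[where f="vol d"]) auto
  also have "\<dots> = vol d {\<theta>\<in>K. s \<le> ip d \<theta> x} + vol d {\<theta>\<in>K. ip d \<theta> x < s}"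
    by (rule vol_disj_Un[OF b1 b2 _ KRs KRs R]) auto
  finally have s1: "vol d K = vol d {\<theta>\<in>K. s \<le> ip d \<theta> x} + vol d {\<theta>\<in>K. ip d \<theta> x < s}" .
  have "vol d {\<theta>\<in>K. ip d \<theta> x \<le> s + e} = vol d ({\<theta>\<in>K. ip d \<theta> x < s} \<union> S)"
    unfolding S_def by (rule arg_cong[where f="vol d"]) (use e in auto)
  also have "\<dots> = vol d {\<theta>\<in>K. ip d \<theta> x < s} + vol d S"
    by (rule vol_disj_Un[OF b2 b3 _ KRs]) (use KR R in \<open>auto simp: S_def\<close>)
  finally have s2: "vol d {\<theta>\<in>K. ip d \<theta> x \<le> s + e} = vol d {\<theta>\<in>K. ip d \<theta> x < s} + vol d S" .
  have "vol d S * (b - a + e) = vol d S * (b - s) + vol d S * (s + e - a)" by (simp add: algebra_simps)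
  also have "\<dots> \<le> real d * e' * (vol d K + vol d S)" using i1 i2' s1 s2 by (simp add: algebra_simps)
  finally have "vol d S * (b - a + e) \<le> real d * e' * (vol d K + vol d S)" .
  then have F: "vol d S * (4 * real d * e' + e) \<le> real d * e' * (vol d K + vol d S)"
    unfolding e'eq[symmetric] .
  have X: "vol d S * (4 * real d * e' + e) = 4 * (real d * e' * vol d S) + e * vol d S"
    by (simp add: algebra_simps)
  have Y: "real d * e' * (vol d K + vol d S) = real d * e' * vol d K + real d * e' * vol d S"
    by (simp add: algebra_simps)
  have Z: "0 \<le> e * vol d S" using e vol_nonneg[of d S] by simp
  have "(real d * e') * (3 * vol d S) \<le> (real d * e') * vol d K" using F X Y Z by (simp add: algebra_simps)
  moreover have "real d * e' > 0" using dp ee e by simp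
  ultimately have "3 * vol d S \<le> vol d K" by (rule mult_left_le_imp_le)
  then have "vol d S \<le> vol d K / 3" by simp
  then show ?thesis unfolding S_def .
qed

lemma reduce:
  assumes d: "d \<ge> 1" and Pcl: "closed P" and Pc: "cvx P" and PR: "P \<subseteq> rball d 1" and xr: "xx \<in> rball d 1"
    and del: "\<delta> \<ge> 0" and a: "a \<in> P" and b: "b \<in> P" and gap: "4 * real d * \<delta> < ip d a xx - ip d b xx"
    and half: "vol d {\<theta>\<in>mink d P \<delta>. ip d \<theta> xx \<ge> yy} = vol d (mink d P \<delta>) / 2"
    and P': "P' = {\<theta>\<in>P. ip d \<theta> xx \<le> yy} \<or> P' = {\<theta>\<in>P. ip d \<theta> xx \<ge> yy}"
  shows "vol d (mink d P' \<delta>) \<le> 5/6 * vol d (mink d P \<delta>)"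
proof -
  define K where "K = mink d P \<delta>"
  have Kc: "cvx K" unfolding K_def using Pc by (rule mink_cvx)
  have Kcl: "closed K" unfolding K_def using Pcl PR by (rule mink_closed)
  have KR: "K \<subseteq> rball d (1 + \<delta>)" unfolding K_def using PR by (rule mink_rball)
  have R: "1 + \<delta> \<ge> 0" using del by simp
  have PK: "P \<subseteq> K" unfolding K_def using del by (rule mink_sup)
  have KRs: "\<And>Q. {\<theta>\<in>K. Q \<theta>} \<subseteq> rball d (1 + \<delta>)" using KR by auto
  have slab: "vol d {\<theta>\<in>K. s \<le> ip d \<theta> xx \<and> ip d \<theta> xx \<le> s + \<delta>} \<le> vol d K / 3" for s
    using PK a b by (intro slab_bound[OF Kc Kcl KR R d _ _ del gap]) auto
  have bge: "{\<theta>\<in>K. yy \<le> ip d \<theta> xx} \<in> sets borel" using closed_ge[OF Kcl] by auto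
  have blt: "{\<theta>\<in>K. ip d \<theta> xx < yy} \<in> sets borel" using borel_lt[OF Kcl] by auto
  have bsl: "{\<theta>\<in>K. s \<le> ip d \<theta> xx \<and> ip d \<theta> xx \<le> s + \<delta>} \<in> sets borel" for s
  proof -
    have "{\<theta>\<in>K. s \<le> ip d \<theta> xx \<and> ip d \<theta> xx \<le> s + \<delta>} = {\<theta>\<in>{\<theta>\<in>K. s \<le> ip d \<theta> xx}. ip d \<theta> xx \<le> s + \<delta>}" by auto
    then show ?thesis using closed_le[OF closed_ge[OF Kcl]] by auto
  qed
  have hK: "vol d {\<theta>\<in>K. yy \<le> ip d \<theta> xx} = vol d K / 2" using half unfolding K_def by simp
  have "vol d K = vol d ({\<theta>\<in>K. yy \<le> ip d \<theta> xx} \<union> {\<theta>\<in>K. ip d \<theta> xx < yy})"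
    by (rule arg_cong[where f="vol d"]) auto
  also have "\<dots> = vol d {\<theta>\<in>K. yy \<le> ip d \<theta> xx} + vol d {\<theta>\<in>K. ip d \<theta> xx < yy}"
    by (rule vol_disj_Un[OF bge blt _ KRs KRs R]) auto
  finally have hK2: "vol d {\<theta>\<in>K. ip d \<theta> xx < yy} = vol d K / 2" using hK by simp
  have P'P: "P' \<subseteq> P" using P' by auto
  have K'K: "mink d P' \<delta> \<subseteq> K" unfolding K_def using P'P by (rule mink_mono)
  have K'b: "mink d P' \<delta> \<in> sets borel"
  proof -
    have "closed P'" using P'
    proof
      assume "P' = {\<theta>\<in>P. ip d \<theta> xx \<le> yy}" then show ?thesis using closed_le[OF Pcl] by simp
    next
      assume "P' = {\<theta>\<in>P. ip d \<theta> xx \<ge> yy}" then show ?thesis using closed_ge[OF Pcl] by simp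
    qed
    then have "closed (mink d P' \<delta>)" using P'P PR by (intro mink_closed) auto
    then show ?thesis by auto
  qed
  from P' show ?thesis
  proof
    assume P'1: "P' = {\<theta>\<in>P. ip d \<theta> xx \<le> yy}"
    have "mink d P' \<delta> \<subseteq> {\<theta>\<in>K. ip d \<theta> xx < yy} \<union> {\<theta>\<in>K. yy \<le> ip d \<theta> xx \<and> ip d \<theta> xx \<le> yy + \<delta>}"
    proof
      fix \<theta> assume th: "\<theta> \<in> mink d P' \<delta>"
      have "ip d \<theta> xx \<le> yy + \<delta>" using mink_level_le[OF th _ xr] P'1 by auto
      then show "\<theta> \<in> {\<theta>\<in>K. ip d \<theta> xx < yy} \<union> {\<theta>\<in>K. yy \<le> ip d \<theta> xx \<and> ip d \<theta> xx \<le> yy + \<delta>}"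
        using K'K th by auto
    qed
    then have "vol d (mink d P' \<delta>) \<le> vol d ({\<theta>\<in>K. ip d \<theta> xx < yy} \<union> {\<theta>\<in>K. yy \<le> ip d \<theta> xx \<and> ip d \<theta> xx \<le> yy + \<delta>})"
      using KR by (intro vol_mono[OF _ pre_sets[OF K'b] sets.Un[OF blt bsl[of yy]] _ R]) auto
    also have "\<dots> \<le> vol d {\<theta>\<in>K. ip d \<theta> xx < yy} + vol d {\<theta>\<in>K. yy \<le> ip d \<theta> xx \<and> ip d \<theta> xx \<le> yy + \<delta>}"
      by (rule vol_Un_le[OF blt bsl])
    also have "\<dots> \<le> vol d K / 2 + vol d K / 3" using hK2 slab[of yy] by simp
    finally show ?thesis unfolding K_def by simp
  next
    assume P'2: "P' = {\<theta>\<in>P. ip d \<theta> xx \<ge> yy}"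
    have "mink d P' \<delta> \<subseteq> {\<theta>\<in>K. yy \<le> ip d \<theta> xx} \<union> {\<theta>\<in>K. yy - \<delta> \<le> ip d \<theta> xx \<and> ip d \<theta> xx \<le> yy - \<delta> + \<delta>}"
    proof
      fix \<theta> assume th: "\<theta> \<in> mink d P' \<delta>"
      have "ip d \<theta> xx \<ge> yy - \<delta>" using mink_level_ge[OF th _ xr] P'2 by auto
      then show "\<theta> \<in> {\<theta>\<in>K. yy \<le> ip d \<theta> xx} \<union> {\<theta>\<in>K. yy - \<delta> \<le> ip d \<theta> xx \<and> ip d \<theta> xx \<le> yy - \<delta> + \<delta>}"
        using K'K th by auto
    qed
    then have "vol d (mink d P' \<delta>) \<le> vol d ({\<theta>\<in>K. yy \<le> ip d \<theta> xx} \<union> {\<theta>\<in>K. yy - \<delta> \<le> ip d \<theta> xx \<and> ip d \<theta> xx \<le> yy - \<delta> + \<delta>})"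
      using KR by (intro vol_mono[OF _ pre_sets[OF K'b] sets.Un[OF bge bsl[of "yy - \<delta>"]] _ R]) auto
    also have "\<dots> \<le> vol d {\<theta>\<in>K. yy \<le> ip d \<theta> xx} + vol d {\<theta>\<in>K. yy - \<delta> \<le> ip d \<theta> xx \<and> ip d \<theta> xx \<le> yy - \<delta> + \<delta>}"
      by (rule vol_Un_le[OF bge bsl])
    also have "\<dots> \<le> vol d K / 2 + vol d K / 3" using hK slab[of "yy - \<delta>"] by simp
    finally show ?thesis unfolding K_def by simp
  qed
qed

section \<open>Scale and width\<close>

lemma scale_eq: "w > 0 \<Longrightarrow> scale w = \<lfloor>- log 2 w\<rfloor>"
  unfolding scale_def
proof (rule Greatest_equality)
  assume w: "w > 0"
  have iff: "w \<le> 2 powr (- real_of_int l) \<longleftrightarrow> real_of_int l \<le> - log 2 w" for l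
    using log_le_iff[of 2 w "- real_of_int l"] w by linarith
  show "w \<le> 2 powr (- real_of_int \<lfloor>- log 2 w\<rfloor>)" unfolding iff by simp
  fix l assume "w \<le> 2 powr (- real_of_int l)"
  then have "real_of_int l \<le> - log 2 w" unfolding iff .
  then show "l \<le> \<lfloor>- log 2 w\<rfloor>" by (simp add: le_floor_iff)
qed

lemma scale_props:
  assumes w: "w > 0"
  shows "w \<le> 2 powr (- real_of_int (scale w))" "2 powr (- real_of_int (scale w) - 1) < w"
    "w \<le> 2 \<Longrightarrow> scale w \<ge> -1"
proof -
  have iff: "w \<le> 2 powr (- real_of_int l) \<longleftrightarrow> real_of_int l \<le> - log 2 w" for l
    using log_le_iff[of 2 w "- real_of_int l"] w by linarith
  have sc: "scale w = \<lfloor>- log 2 w\<rfloor>" using w by (rule scale_eq)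
  show "w \<le> 2 powr (- real_of_int (scale w))" unfolding iff sc by simp
  have "- log 2 w < real_of_int (scale w) + 1" unfolding sc by linarith
  then have "- real_of_int (scale w) - 1 < log 2 w" by simp
  then show "2 powr (- real_of_int (scale w) - 1) < w" using less_log_iff[of 2 w] w by simp
  assume "w \<le> 2"
  then have "w \<le> 2 powr (- real_of_int (-1::int))" by simp
  then have "real_of_int (-1::int) \<le> - log 2 w" unfolding iff .
  then show "scale w \<ge> -1" unfolding sc by (simp add: le_floor_iff)
qed

lemma L2_minus: "L2_set (\<lambda>i. - b i) A = L2_set b A"
  unfolding L2_set_def by simp

lemma ip_diff_le2:
  assumes "a \<in> rball d 1" "b \<in> rball d 1" "xx \<in> rball d 1"
  shows "ip d (\<lambda>i. a i - b i) xx \<le> 2"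
proof -
  have "L2_set (\<lambda>i. a i - b i) {..<d} \<le> L2_set a {..<d} + L2_set (\<lambda>i. - b i) {..<d}"
    using L2_set_triangle_ineq[of a "\<lambda>i. - b i" "{..<d}"] by simp
  also have "\<dots> \<le> 2" using assms unfolding rball_L2 L2_minus by simp
  finally have n: "L2_set (\<lambda>i. a i - b i) {..<d} \<le> 2" .
  have "ip d (\<lambda>i. a i - b i) xx \<le> L2_set (\<lambda>i. a i - b i) {..<d} * L2_set xx {..<d}"
    using ip_abs_le[of d "\<lambda>i. a i - b i" xx] by simp
  also have "\<dots> \<le> 2 * 1" using n assms(3) unfolding rball_L2
    by (intro mult_mono) auto
  finally show ?thesis by simp
qed

lemma width_props:
  assumes P: "P \<subseteq> rball d 1" and z: "z \<in> P" and xx: "xx \<in> rball d 1"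
  shows "\<And>a b. a \<in> P \<Longrightarrow> b \<in> P \<Longrightarrow> ip d a xx - ip d b xx \<le> width d P xx"
    and "width d P xx \<le> 2"
    and "\<And>c. c < width d P xx \<Longrightarrow> \<exists>a\<in>P. \<exists>b\<in>P. c < ip d a xx - ip d b xx"
proof -
  define D where "D = {ip d (\<lambda>i. a i - b i) xx | a b. a \<in> P \<and> b \<in> P}"
  have W: "width d P xx = Sup D" unfolding width_def D_def ..
  have "ip d (\<lambda>i. z i - z i) xx \<in> D" unfolding D_def using z by blast
  then have ne: "D \<noteq> {}" by blast
  have ub: "u \<le> 2" if uD: "u \<in> D" for u
  proof -
    obtain a b where "u = ip d (\<lambda>i. a i - b i) xx" "a \<in> P" "b \<in> P" using uD unfolding D_def by blast
    then show ?thesis using P ip_diff_le2[OF _ _ xx, of a b] by auto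
  qed
  then have bdd: "bdd_above D" by (rule bdd_aboveI)
  show "ip d a xx - ip d b xx \<le> width d P xx" if "a \<in> P" "b \<in> P" for a b
  proof -
    have "ip d (\<lambda>i. a i - b i) xx \<in> D" unfolding D_def using that by blast
    then show ?thesis unfolding W ip_diff using bdd by (intro cSup_upper) auto
  qed
  show "width d P xx \<le> 2" unfolding W using ne ub by (rule cSup_least)
  show "\<exists>a\<in>P. \<exists>b\<in>P. c < ip d a xx - ip d b xx" if cw: "c < width d P xx" for c
  proof -
    obtain u where "u \<in> D" "c < u" using cw unfolding W using less_cSup_iff[OF ne bdd] by blast
    then obtain a b where "u = ip d (\<lambda>i. a i - b i) xx" "a \<in> P" "b \<in> P" "c < u" unfolding D_def by blast
    then show ?thesis unfolding ip_diff by blast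
  qed
qed

lemma gsum1: "(\<Sum>k<N. (1/2::real)^k) \<le> 2"
proof -
  have "(\<Sum>k<N. (1/2::real)^k) = (1 - (1/2)^N) / (1 - 1/2)" by (simp add: sum_gp_strict)
  also have "\<dots> \<le> 2" by simp
  finally show ?thesis .
qed

lemma gsum2_eq: "(\<Sum>k<N. real k * (1/2::real)^k) = 2 - 2 * (real N + 1) * (1/2)^N"
proof (induction N)
  case 0
  then show ?case by simp
next
  case (Suc N)
  have "(\<Sum>k<Suc N. real k * (1/2::real)^k) = 2 - 2 * (real N + 1) * (1/2)^N + real N * (1/2)^N"
    using Suc by simp
  also have "\<dots> = 2 - 2 * (real (Suc N) + 1) * (1/2)^(Suc N)" by (simp add: algebra_simps)
  finally show ?case .
qed

lemma gsum2: "(\<Sum>k<N. real k * (1/2::real)^k) \<le> 2"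
  unfolding gsum2_eq by simp

lemma pw1: "2 powr (- real_of_int (int k - 1)) = 2 * (1/2::real)^k"
proof -
  have "- real_of_int (int k - 1) = 1 - real k" by simp
  then have "2 powr (- real_of_int (int k - 1)) = 2 powr 1 / 2 powr (real k)" by (simp add: powr_diff)
  also have "\<dots> = 2 * (1/2::real)^k" by (simp add: powr_realpow power_one_over)
  finally show ?thesis .
qed

lemma pw2: "2 powr (- real_of_int (int k - 1) - 1) = (1/2::real)^k"
proof -
  have "- real_of_int (int k - 1) - 1 = - real k" by simp
  then have "2 powr (- real_of_int (int k - 1) - 1) = 1 / 2 powr (real k)" by (simp add: powr_minus_divide)
  also have "\<dots> = (1/2::real)^k" by (simp add: powr_realpow power_one_over)
  finally show ?thesis .
qed

lemma delta_eq: "d \<ge> 1 \<Longrightarrow> delta d (int k - 1) = (1/2::real)^k / (4 * real d)"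
  unfolding delta_def pw1 by simp

lemma ln5: "ln (5::real) \<le> 3"
proof -
  have "ln (5::real) \<le> ln 8" by simp
  also have "(8::real) = 2^3" by simp
  also have "ln ((2::real)^3) = real 3 * ln 2" by (rule ln_realpow)
  also have "\<dots> \<le> 3" using ln_2_less_1 by simp
  finally show ?thesis .
qed

lemma vol_le_cube:
  assumes "pre d S \<in> sets (MM d)" "S \<subseteq> cube d c r" "r \<ge> 0"
  shows "vol d S \<le> (2*r)^d"
proof -
  have "vol d S \<le> vol d (cube d c r)" unfolding vol_pre
    by (rule measure_mono_fmeasurable[OF pre_mono[OF assms(2)] assms(1) cube_fmeasurable[OF assms(3)]])
  then show ?thesis using measure_cube[OF assms(3)] by simp
qed

lemma vol_ge_cube:
  assumes "S \<in> sets borel" "cube d c r \<subseteq> S" "S \<subseteq> rball d R" "R \<ge> 0" "r \<ge> 0"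
  shows "(2*r)^d \<le> vol d S"
proof -
  have "pre d (cube d c r) \<in> sets (MM d)" unfolding pre_cube by (rule sets_PiM_I_finite) auto
  then have "vol d (cube d c r) \<le> vol d S" by (rule vol_mono[OF assms(2) _ assms(1,3,4)])
  then show ?thesis using measure_cube[OF assms(5)] by simp
qed

lemma rball_rvec: "rball d r \<subseteq> rvec d" unfolding rball_def by auto

lemma round_regret_cases:
  "round_regret c v yy \<le> 0 \<or> ((c \<le> yy \<and> \<not> yy \<le> v \<or> \<not> c \<le> yy \<and> yy \<le> v) \<and> round_regret c v yy \<le> v - c)"
  unfolding round_regret_def by auto

lemma main_bound:
  assumes d: "d \<ge> 1" and ths: "ths \<in> rball d 1" and thb: "thb \<in> rball d 1"
    and xr: "\<forall>t. x t \<in> rball d 1" and sp: "steiner_prices d ths thb x y"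
  shows "cum_regret d ths thb x y T \<le> 96 * real d * (1 + ln (real d))"
proof -
  define \<Phi> where "\<Phi> t = knowledge d ths thb x y t" for t
  define w where "w t = width d (\<Phi> t) (x t)" for t
  define dk where "dk k = (1/2::real)^k / (4 * real d)" for k :: nat
  define V where "V k t = vol d (mink d (\<Phi> t) (dk k))" for k t
  define L where "L k = (2 * (dk k / real d))^d" for k
  define U where "U k = (2 * (1 + dk k))^d" for k
  define P where "P k t = 12 * (1/2::real)^k * (ln (V k t) - ln (L k))" for k t
  have dp: "real d > 0" using d by simp
  have dk0: "dk k > 0" for k unfolding dk_def using dp by simp
  have dk1: "dk k \<le> 1/4" for k
  proof -
    have "dk k \<le> 1 / (4 * real d)" unfolding dk_def using dp
      by (intro divide_right_mono) (auto simp: power_le_one)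
    also have "\<dots> \<le> 1/4" using d by (simp add: field_simps)
    finally show ?thesis .
  qed
  have Pcl: "closed (\<Phi> t)" for t unfolding \<Phi>_def by (rule know_closed)
  have Pc: "cvx (\<Phi> t)" for t unfolding \<Phi>_def by (rule know_cvx)
  have PR: "\<Phi> t \<subseteq> rball d 1" for t unfolding \<Phi>_def by (rule know_rball)
  have Pm: "ths \<in> \<Phi> t" "thb \<in> \<Phi> t" for t unfolding \<Phi>_def using know_mem[OF ths thb] by auto
  have Ps: "\<Phi> (Suc t) \<subseteq> \<Phi> t" for t unfolding \<Phi>_def by (rule know_sub)
  have Kcl: "closed (mink d (\<Phi> t) (dk k))" for t k by (rule mink_closed[OF Pcl PR])
  have KR: "mink d (\<Phi> t) (dk k) \<subseteq> rball d (1 + dk k)" for t k by (rule mink_rball[OF PR])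
  have R0: "1 + dk k \<ge> 0" for k using dk0[of k] by simp
  have L0: "L k > 0" for k unfolding L_def using dk0 dp by simp
  have VL: "L k \<le> V k t" for k t
  proof -
    have "\<Phi> t \<subseteq> rvec d" using PR[of t] rball_rvec[of d 1] by blast
    then have "cube d ths (dk k / real d) \<subseteq> mink d (\<Phi> t) (dk k)"
      using dk0[of k] by (intro mink_cube[OF Pm(1) _ _ d]) auto
    then show ?thesis unfolding L_def V_def using Kcl dk0[of k] dp
      by (intro vol_ge_cube[OF _ _ KR R0]) auto
  qed
  have V0: "V k t > 0" for k t using L0[of k] VL[of k t] by linarith
  have VU: "V k t \<le> U k" for k t
  proof -
    have "mink d (\<Phi> t) (dk k) \<subseteq> cube d (\<lambda>_. 0) (1 + dk k)" using KR rball_cube by blast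
    moreover have "pre d (mink d (\<Phi> t) (dk k)) \<in> sets (MM d)" using Kcl by (intro pre_sets) auto
    ultimately show ?thesis unfolding V_def U_def using R0 by (intro vol_le_cube) auto
  qed
  have Vmono: "V k (Suc t) \<le> V k t" for k t
    unfolding V_def
  proof (rule vol_mono[OF mink_mono[OF Ps] pre_sets _ KR R0])
    show "mink d (\<Phi> (Suc t)) (dk k) \<in> sets borel" using Kcl by auto
    show "mink d (\<Phi> t) (dk k) \<in> sets borel" using Kcl by auto
  qed
  have Pnn: "0 \<le> P k t" for k t
    unfolding P_def using VL[of k t] L0[of k] by (intro mult_nonneg_nonneg) auto
  have Pmono: "P k (Suc t) \<le> P k t" for k t
    unfolding P_def using Vmono[of k t] V0[of k "Suc t"] by (intro mult_left_mono) auto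
  have Pdrop: "2 * (1/2::real)^k \<le> P k t - P k (Suc t)"
    if mist: "ip d ths (x t) \<le> y t \<and> \<not> y t \<le> ip d thb (x t) \<or> \<not> ip d ths (x t) \<le> y t \<and> y t \<le> ip d thb (x t)"
      and wp: "w t > 0" and sk: "scale (w t) = int k - 1" for k t
  proof -
    have half: "vol d {\<theta>\<in>mink d (\<Phi> t) (dk k). ip d \<theta> (x t) \<ge> y t} = vol d (mink d (\<Phi> t) (dk k)) / 2"
    proof -
      have "w t \<noteq> 0" using wp by simp
      then show ?thesis using sp unfolding steiner_prices_def Let_def \<Phi>_def[symmetric] w_def[symmetric]
        by (auto simp: sk delta_eq[OF d] dk_def)
    qed
    have "2 powr (- real_of_int (scale (w t)) - 1) < w t" using scale_props(2)[OF wp] .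
    then have "(1/2::real)^k < w t" unfolding sk pw2 .
    then obtain a b where ab: "a \<in> \<Phi> t" "b \<in> \<Phi> t" "(1/2::real)^k < ip d a (x t) - ip d b (x t)"
      using width_props(3)[OF PR Pm(1) xr[rule_format]] unfolding w_def by blast
    have gap: "4 * real d * dk k < ip d a (x t) - ip d b (x t)" using ab(3) dp unfolding dk_def by simp
    have P': "\<Phi> (Suc t) = {\<theta>\<in>\<Phi> t. ip d \<theta> (x t) \<le> y t} \<or> \<Phi> (Suc t) = {\<theta>\<in>\<Phi> t. ip d \<theta> (x t) \<ge> y t}"
      using mist unfolding \<Phi>_def by (auto simp: Let_def)
    have red: "V k (Suc t) \<le> 5/6 * V k t" unfolding V_def
      by (rule reduce[OF d Pcl Pc PR xr[rule_format] _ ab(1,2) gap half P']) (use dk0[of k] in simp)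
    have "ln (V k (Suc t)) \<le> ln (5/6 * V k t)" using red V0 by simp
    also have "\<dots> = ln (5/6) + ln (V k t)" using V0[of k t] ln_mult[of "5/6::real" "V k t"] by simp
    also have "ln (5/6::real) \<le> - 1/6" using ln_le_minus_one[of "5/6::real"] by simp
    finally have "ln (V k (Suc t)) \<le> ln (V k t) - 1/6" by simp
    then have "12 * (1/2::real)^k * (1/6) \<le> 12 * (1/2)^k * (ln (V k t) - ln (V k (Suc t)))"
      by (intro mult_left_mono) auto
    then show ?thesis unfolding P_def by (simp add: algebra_simps)
  qed
  have P0: "P k 0 \<le> 12 * (1/2::real)^k * (real d * (3 + 2 * ln (real d) + real k))" for k
  proof -
    have "ln (V k 0) - ln (L k) \<le> ln (U k) - ln (L k)" using VU[of k 0] V0[of k 0] by simp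
    also have "ln (U k) - ln (L k) = real d * (ln (2 * (1 + dk k)) - ln (2 * (dk k / real d)))"
      unfolding U_def L_def by (simp add: ln_realpow algebra_simps)
    also have "ln (2 * (1 + dk k)) - ln (2 * (dk k / real d)) = ln ((1 + dk k) * real d / dk k)"
    proof -
      have q: "(1 + dk k) * real d / dk k = (2 * (1 + dk k)) / (2 * (dk k / real d))"
        using dk0[of k] dp by (simp add: field_simps)
      have "2 * (1 + dk k) \<noteq> 0" "2 * (dk k / real d) \<noteq> 0" using dk0[of k] dp by (simp_all add: add_pos_pos)
      then show ?thesis unfolding q by (simp only: ln_div if_True not_False_eq_True conj_absorb)
    qed
    also have "\<dots> \<le> ln (5 * (real d)^2 * 2^k)"
    proof -
      have e1: "(1 + dk k) * real d / dk k = real d / dk k + real d" using dk0[of k] by (simp add: field_simps)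
      have e2: "real d / dk k = 4 * (real d)^2 * 2^k" unfolding dk_def
        by (simp add: field_simps power2_eq_square power_one_over)
      have "real d \<le> (real d)^2 * 2^k"
      proof -
        have "real d \<le> (real d)^2" using d by (simp add: power2_eq_square)
        also have "\<dots> = (real d)^2 * 1" by simp
        also have "\<dots> \<le> (real d)^2 * 2^k" by (intro mult_left_mono) auto
        finally show ?thesis .
      qed
      then have "(1 + dk k) * real d / dk k \<le> 5 * (real d)^2 * 2^k" unfolding e1 e2 by (simp add: mult.commute)
      moreover have "0 < (1 + dk k) * real d / dk k" using dk0[of k] dp by simp
      ultimately show ?thesis using dp by (subst ln_le_cancel_iff) auto
    qed
    also have "ln (5 * (real d)^2 * 2^k) = ln 5 + 2 * ln (real d) + real k * ln 2"
      using dp by (simp add: ln_mult ln_realpow)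
    also have "\<dots> \<le> 3 + 2 * ln (real d) + real k"
      using ln5 ln_2_less_1 by (smt (verit) mult_left_le of_nat_0_le_iff)
    finally have "ln (V k 0) - ln (L k) \<le> real d * (3 + 2 * ln (real d) + real k)"
      using dp by (simp add: mult_left_mono)
    then show ?thesis unfolding P_def by (intro mult_left_mono) auto
  qed
  define kk where "kk t = nat (scale (w t) + 1)" for t
  define Km where "Km = Suc (\<Sum>t<T. kk t)"
  have rr: "round_regret (ip d ths (x t)) (ip d thb (x t)) (y t) \<le> (\<Sum>k<Km. P k t - P k (Suc t))"
    if tT: "t < T" for t
  proof -
    have nn: "0 \<le> (\<Sum>k<Km. P k t - P k (Suc t))" using Pmono by (intro sum_nonneg) auto
    have vw: "ip d thb (x t) - ip d ths (x t) \<le> w t"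
      unfolding w_def by (rule width_props(1)[OF PR Pm(1) xr[rule_format] Pm(2,1)])
    consider "round_regret (ip d ths (x t)) (ip d thb (x t)) (y t) \<le> 0"
      | "(ip d ths (x t) \<le> y t \<and> \<not> y t \<le> ip d thb (x t) \<or> \<not> ip d ths (x t) \<le> y t \<and> y t \<le> ip d thb (x t))"
        "round_regret (ip d ths (x t)) (ip d thb (x t)) (y t) \<le> ip d thb (x t) - ip d ths (x t)"
      using round_regret_cases by blast
    then show ?thesis
    proof cases
      case 1
      then show ?thesis using nn by linarith
    next
      case 2
      show ?thesis
      proof (cases "w t > 0")
        case False
        then show ?thesis using 2 vw nn by linarith
      next
        case True
        have w2: "w t \<le> 2" unfolding w_def by (rule width_props(2)[OF PR Pm(1) xr[rule_format]])
        have sge: "scale (w t) \<ge> -1" using scale_props(3)[OF True w2] .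
        have sk: "scale (w t) = int (kk t) - 1" unfolding kk_def using sge by simp
        have "w t \<le> 2 powr (- real_of_int (scale (w t)))" by (rule scale_props(1)[OF True])
        then have "w t \<le> 2 * (1/2::real)^(kk t)" unfolding sk pw1 .
        also have "\<dots> \<le> P (kk t) t - P (kk t) (Suc t)" by (rule Pdrop[OF 2(1) True sk])
        also have "\<dots> \<le> (\<Sum>k<Km. P k t - P k (Suc t))"
        proof (rule member_le_sum[where f="\<lambda>k. P k t - P k (Suc t)"])
          have "kk t \<le> (\<Sum>t<T. kk t)" using tT by (intro member_le_sum) auto
          then show "kk t \<in> {..<Km}" unfolding Km_def by simp
          show "\<And>k. k \<in> {..<Km} - {kk t} \<Longrightarrow> 0 \<le> P k t - P k (Suc t)" using Pmono by simp
        qed simp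
        finally show ?thesis using 2 vw by linarith
      qed
    qed
  qed
  have "cum_regret d ths thb x y T \<le> (\<Sum>t<T. \<Sum>k<Km. P k t - P k (Suc t))"
    unfolding cum_regret_def using rr by (intro sum_mono) auto
  also have "\<dots> = (\<Sum>k<Km. \<Sum>t<T. P k t - P k (Suc t))" by (rule sum.swap)
  also have "\<dots> = (\<Sum>k<Km. P k 0 - P k T)" by (simp add: sum_lessThan_telescope')
  also have "\<dots> \<le> (\<Sum>k<Km. 12 * (1/2::real)^k * (real d * (3 + 2 * ln (real d) + real k)))"
    using P0 Pnn by (intro sum_mono) (smt (verit))
  also have "\<dots> = 12 * real d * ((3 + 2 * ln (real d)) * (\<Sum>k<Km. (1/2::real)^k) + (\<Sum>k<Km. real k * (1/2::real)^k))"
    by (simp add: sum_distrib_left sum_distrib_right sum.distrib algebra_simps)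
  also have "\<dots> \<le> 12 * real d * ((3 + 2 * ln (real d)) * 2 + 2)"
  proof -
    have l0: "0 \<le> ln (real d)" using d by simp
    have "(3 + 2 * ln (real d)) * (\<Sum>k<Km. (1/2::real)^k) \<le> (3 + 2 * ln (real d)) * 2"
      using gsum1 l0 by (intro mult_left_mono) auto
    then show ?thesis using gsum2[of Km] dp by (intro mult_left_mono) auto
  qed
  also have "\<dots> \<le> 96 * real d * (1 + ln (real d))"
    using dp d by (simp add: algebra_simps)
  finally show ?thesis .
qed

theorem theorem5p3:
  "\<exists>C::real. \<forall>d::nat. \<forall>ths thb x y T.
     d \<ge> 1 \<longrightarrow> ths \<in> rball d 1 \<longrightarrow> thb \<in> rball d 1 \<longrightarrow>
     (\<forall>t. x t \<in> rball d 1) \<longrightarrow> steiner_prices d ths thb x y \<longrightarrow>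
     cum_regret d ths thb x y T \<le> C * real d * (1 + ln (real d))"
  by (rule exI[of _ 96]) (blast intro: main_bound)

end
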